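(* Let $1\le k\le d$, $\gamma=(\gamma_1,\dots,\gamma_{d+1-k})\in\mathbb R^{d+1-k}$, and $\mathbf n\in\mathbb N_0^d$ with $n_{d-k+2}\ge1,\dots,n_d\ge1$. Write $\tilde\gamma=(\gamma,-\mathbf 1_{k})=(\tilde\gamma_1,\dots,\tilde\gamma_{d+1})$. Then $$P_{\mathbf n}^{(\gamma,-\mathbf 1_k)}(x)=x_{d+2-k}\cdots x_d(1-|x|)\sum_{i=1}^d\lambda_{n_i,\tilde\gamma_i}P^{(\gamma,\mathbf 1_k)}_{\mathbf n-e_i-(\mathbf 0,\mathbf 1_{k-1})}(x),\qquad \lambda_{n_i,\tilde\gamma_i}=(-1)^{k-1}\frac{n_i(n_i+\tilde\gamma_i)}{|\mathbf n|}\prod_{j=0}^{k-2}(|\mathbf n|-j),$$ where any term whose index has a negative entry has coefficient $0$ and is read as $0$.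
   Context: $|x|=x_1+\dots+x_d$, $|\mathbf n|=n_1+\dots+n_d$, $e_i$ standard basis vectors of $\mathbb R^d$; $(\mathbf 0,\mathbf 1_{k-1})\in\mathbb N_0^d$ has ones exactly in the last $k-1$ entries; $(\gamma,\pm\mathbf 1_k)\in\mathbb R^{d+1}$ is $\gamma$ followed by $k$ entries $\pm1$. For $\boldsymbol\gamma\in\mathbb R^{d+1}$ and $\mathbf m\in\mathbb N_0^d$, $P_{\mathbf m}^{\boldsymbol\gamma}(x)=\prod_{i\le d}x_i^{-\gamma_i}(1-|x|)^{-\gamma_{d+1}}\partial_1^{m_1}\cdots\partial_d^{m_d}\big[\prod_{i\le d}x_i^{\gamma_i+m_i}(1-|x|)^{\gamma_{d+1}+|\mathbf m|}\big]$ on the interior of $T^d$. For $k=1$ the product $x_{d+2-k}\cdots x_d$ is empty (equal to $1$). *)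

theory Defs
  imports "HOL-Analysis.Analysis"
begin

text \<open>Points of R^d are functions nat => real, coordinates x 1, ..., x d (1-based);
  multi-indices are functions nat => nat with entries n 1, ..., n d;
  parameter vectors in R^(d+1) are functions nat => real with entries 1..d+1.\<close>

definition abs_pt :: "nat \<Rightarrow> (nat \<Rightarrow> real) \<Rightarrow> real" where
  "abs_pt d x = (\<Sum>i=1..d. x i)"

definition abs_idx :: "nat \<Rightarrow> (nat \<Rightarrow> nat) \<Rightarrow> nat" where
  "abs_idx d n = (\<Sum>i=1..d. n i)"

definition simplex_interior :: "nat \<Rightarrow> (nat \<Rightarrow> real) set" where
  "simplex_interior d = {x. (\<forall>i\<in>{1..d}. 0 < x i) \<and> abs_pt d x < 1}"

definition partial :: "nat \<Rightarrow> ((nat \<Rightarrow> real) \<Rightarrow> real) \<Rightarrow> (nat \<Rightarrow> real) \<Rightarrow> real" where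
  "partial i f x = deriv (\<lambda>t. f (x(i := t))) (x i)"

definition mpartial :: "nat \<Rightarrow> (nat \<Rightarrow> nat) \<Rightarrow> ((nat \<Rightarrow> real) \<Rightarrow> real) \<Rightarrow> (nat \<Rightarrow> real) \<Rightarrow> real" where
  "mpartial d m f = foldr (\<lambda>i g. (partial i ^^ m i) g) [1..<d+1] f"

definition P :: "nat \<Rightarrow> (nat \<Rightarrow> real) \<Rightarrow> (nat \<Rightarrow> nat) \<Rightarrow> (nat \<Rightarrow> real) \<Rightarrow> real" where
  "P d \<gamma> m x =
     (\<Prod>i=1..d. x i powr (- \<gamma> i)) * (1 - abs_pt d x) powr (- \<gamma> (d+1)) *
     mpartial d m
       (\<lambda>y. (\<Prod>i=1..d. y i powr (\<gamma> i + real (m i))) *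
            (1 - abs_pt d y) powr (\<gamma> (d+1) + real (abs_idx d m))) x"

definition ext_param :: "nat \<Rightarrow> nat \<Rightarrow> (nat \<Rightarrow> real) \<Rightarrow> real \<Rightarrow> (nat \<Rightarrow> real)" where
  "ext_param d k \<gamma> c = (\<lambda>j. if j \<le> d + 1 - k then \<gamma> j else c)"

text \<open>Entries (as integers) of n - e_i - (0, 1_{k-1}).\<close>
definition shifted_idx :: "nat \<Rightarrow> nat \<Rightarrow> (nat \<Rightarrow> nat) \<Rightarrow> nat \<Rightarrow> nat \<Rightarrow> int" where
  "shifted_idx d k n i j = int (n j) - (if j = i then 1 else 0) - (if d + 2 - k \<le> j then 1 else 0)"

definition lam :: "nat \<Rightarrow> nat \<Rightarrow> (nat \<Rightarrow> nat) \<Rightarrow> nat \<Rightarrow> real \<Rightarrow> real" where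
  "lam d k n ni g = (-1) ^ (k - 1) * (real ni * (real ni + g)) / real (abs_idx d n) *
      (\<Prod>j\<in>{0..<k-1}. real (abs_idx d n) - real j)"

definition rhs_term :: "nat \<Rightarrow> nat \<Rightarrow> (nat \<Rightarrow> real) \<Rightarrow> (nat \<Rightarrow> nat) \<Rightarrow> (nat \<Rightarrow> real) \<Rightarrow> nat \<Rightarrow> real" where
  "rhs_term d k \<gamma> n x i =
     (if \<forall>j\<in>{1..d}. 0 \<le> shifted_idx d k n i j
      then lam d k n (n i) (ext_param d k \<gamma> (-1) i) *
           P d (ext_param d k \<gamma> 1) (\<lambda>j. nat (shifted_idx d k n i j)) x
      else 0)"

end

theory Submission
  imports Defs
begin


definition eqU :: "nat \<Rightarrow> ((nat \<Rightarrow> real) \<Rightarrow> real) \<Rightarrow> ((nat \<Rightarrow> real) \<Rightarrow> real) \<Rightarrow> bool" where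
  "eqU d f g \<longleftrightarrow> (\<forall>y\<in>simplex_interior d. f y = g y)"

lemma eqU_refl[simp]: "eqU d f f" by (simp add: eqU_def)
lemma eqU_sym: "eqU d f g \<Longrightarrow> eqU d g f" by (simp add: eqU_def)
lemma eqU_trans[trans]: "eqU d f g \<Longrightarrow> eqU d g h \<Longrightarrow> eqU d f h" by (simp add: eqU_def)

lemma abs_pt_upd: "i \<in> {1..d} \<Longrightarrow> abs_pt d (y(i:=t)) = abs_pt d y - y i + t"
proof -
  assume i: "i \<in> {1..d}"
  have h1: "abs_pt d (y(i:=t)) = (y(i:=t)) i + (\<Sum>j\<in>{1..d}-{i}. (y(i:=t)) j)"
    using i unfolding abs_pt_def by (subst sum.remove) auto
  have h2: "(\<Sum>j\<in>{1..d}-{i}. (y(i:=t)) j) = (\<Sum>j\<in>{1..d}-{i}. y j)"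
    by (rule sum.cong) auto
  have h3: "abs_pt d y = y i + (\<Sum>j\<in>{1..d}-{i}. y j)"
    using i unfolding abs_pt_def by (subst sum.remove) auto
  show ?thesis using h1 h2 h3 by simp
qed

lemma U_pos: "y \<in> simplex_interior d \<Longrightarrow> l \<in> {1..d} \<Longrightarrow> 0 < y l"
  by (simp add: simplex_interior_def)

lemma U_lin: "y \<in> simplex_interior d \<Longrightarrow> 0 < 1 - abs_pt d y"
  by (simp add: simplex_interior_def)

lemma U_lin': "y \<in> simplex_interior d \<Longrightarrow> abs_pt d y < 1"
  by (simp add: simplex_interior_def)

lemma line_in:
  assumes y: "y \<in> simplex_interior d" and i: "i \<in> {1..d}"
  shows "\<forall>\<^sub>F t in nhds (y i). y(i:=t) \<in> simplex_interior d"
proof -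
  have p: "0 < y i" using U_pos[OF y i] .
  have q: "y i < 1 - abs_pt d y + y i" using U_lin[OF y] by simp
  have e1: "\<forall>\<^sub>F t in nhds (y i). 0 < t" using eventually_nhds_in_open[of "{0<..}" "y i"] p by simp
  have e2: "\<forall>\<^sub>F t in nhds (y i). t < 1 - abs_pt d y + y i"
    using eventually_nhds_in_open[of "{..<1 - abs_pt d y + y i}" "y i"] q by simp
  show ?thesis using e1 e2
  proof eventually_elim
    case (elim t)
    show ?case using y elim i unfolding simplex_interior_def
      by (auto simp: abs_pt_upd[OF i])
  qed
qed

lemma partial_eqI:
  "((\<lambda>t. f (y(i:=t))) has_real_derivative D) (at (y i)) \<Longrightarrow> partial i f y = D"
  unfolding partial_def by (rule DERIV_imp_deriv)

lemma partial_cong: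
  assumes "eqU d f g" "y \<in> simplex_interior d" "i \<in> {1..d}"
  shows "partial i f y = partial i g y"
proof -
  have "\<forall>\<^sub>F t in nhds (y i). f (y(i:=t)) = g (y(i:=t))"
    using line_in[OF assms(2,3)] by eventually_elim (use assms(1) in \<open>auto simp: eqU_def\<close>)
  then show ?thesis unfolding partial_def by (rule deriv_cong_ev) simp
qed

lemma partial_congU: "eqU d f g \<Longrightarrow> i \<in> {1..d} \<Longrightarrow> eqU d (partial i f) (partial i g)"
  using partial_cong unfolding eqU_def[of d "partial i f"] by blast

inductive rep :: "nat \<Rightarrow> ((nat \<Rightarrow> real) \<Rightarrow> real) \<Rightarrow> bool" for d where
  rep_const: "rep d (\<lambda>y. c)"
| rep_coord: "l \<in> {1..d} \<Longrightarrow> rep d (\<lambda>y. y l powr e)"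
| rep_lin: "rep d (\<lambda>y. (1 - abs_pt d y) powr b)"
| rep_add: "rep d f \<Longrightarrow> rep d g \<Longrightarrow> rep d (\<lambda>y. f y + g y)"
| rep_mult: "rep d f \<Longrightarrow> rep d g \<Longrightarrow> rep d (\<lambda>y. f y * g y)"
| rep_cong: "rep d f \<Longrightarrow> eqU d f g \<Longrightarrow> rep d g"

definition "lined d f i \<longleftrightarrow> (\<forall>y\<in>simplex_interior d.
    ((\<lambda>t. f (y(i:=t))) has_real_derivative partial i f y) (at (y i)))"

lemma rep_partial:
  assumes "rep d f"
  shows "\<forall>i\<in>{1..d}. rep d (partial i f) \<and> lined d f i"
  using assms
proof induction
  case (rep_const c)
  have "partial i (\<lambda>y. c) = (\<lambda>y. 0)" for i
    by (rule ext, rule partial_eqI) simp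
  then show ?case by (auto simp: lined_def intro: rep.rep_const)
next
  case (rep_coord l e)
  show ?case
  proof
    fix i assume i: "i \<in> {1..d}"
    define g where "g = (\<lambda>y::nat\<Rightarrow>real. if i = l then e * y l powr (e - 1) else 0)"
    have D: "((\<lambda>t. (y(i:=t)) l powr e) has_real_derivative g y) (at (y i))"
      if y: "y \<in> simplex_interior d" for y
    proof (cases "i = l")
      case True
      then show ?thesis using has_real_derivative_powr[OF U_pos[OF y i], of e]
        by (simp add: g_def)
    next
      case False
      then show ?thesis by (simp add: g_def)
    qed
    have E: "eqU d (partial i (\<lambda>y. y l powr e)) g"
      unfolding eqU_def by (auto intro!: partial_eqI[where f="\<lambda>y. y l powr e"] D)
    have "rep d g"
    proof (cases "i = l")
      case True
      then show ?thesis unfolding g_def using rep_mult[OF rep.rep_const rep.rep_coord[OF rep_coord]] by simp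
    next
      case False
      then show ?thesis unfolding g_def by (simp add: rep.rep_const)
    qed
    then show "rep d (partial i (\<lambda>y. y l powr e)) \<and> lined d (\<lambda>y. y l powr e) i"
      using E D unfolding lined_def eqU_def
      by (auto intro: rep.rep_cong[OF _ eqU_sym[OF E]])
  qed
next
  case (rep_lin b)
  show ?case
  proof
    fix i assume i: "i \<in> {1..d}"
    define g where "g = (\<lambda>y::nat\<Rightarrow>real. - b * (1 - abs_pt d y) powr (b - 1))"
    have D: "((\<lambda>t. (1 - abs_pt d (y(i:=t))) powr b) has_real_derivative g y) (at (y i))"
      if y: "y \<in> simplex_interior d" for y
    proof -
      have "((\<lambda>t. (1 - (abs_pt d y - y i + t)) powr b) has_real_derivative
              b * (1 - (abs_pt d y - y i + y i)) powr (b - of_nat 1) * (-1)) (at (y i))"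
        by (rule DERIV_fun_powr) (use U_lin[OF y] in \<open>auto intro!: derivative_eq_intros\<close>)
      then show ?thesis by (simp add: abs_pt_upd[OF i] g_def)
    qed
    have E: "eqU d (partial i (\<lambda>y. (1 - abs_pt d y) powr b)) g"
      unfolding eqU_def by (auto intro!: partial_eqI[where f="\<lambda>y. (1 - abs_pt d y) powr b"] D)
    have "rep d g" unfolding g_def by (rule rep_mult[OF rep.rep_const rep.rep_lin])
    then show "rep d (partial i (\<lambda>y. (1 - abs_pt d y) powr b)) \<and> lined d (\<lambda>y. (1 - abs_pt d y) powr b) i"
      using E D unfolding lined_def eqU_def
      by (auto intro: rep.rep_cong[OF _ eqU_sym[OF E]])
  qed
next
  case (rep_add f g)
  show ?case
  proof
    fix i assume i: "i \<in> {1..d}"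
    have D: "((\<lambda>t. f (y(i:=t)) + g (y(i:=t))) has_real_derivative partial i f y + partial i g y) (at (y i))"
      if y: "y \<in> simplex_interior d" for y
      using rep_add.IH i y unfolding lined_def by (auto intro!: DERIV_add)
    have E: "eqU d (partial i (\<lambda>y. f y + g y)) (\<lambda>y. partial i f y + partial i g y)"
      unfolding eqU_def by (auto intro!: partial_eqI[where f="\<lambda>y. f y + g y"] D)
    have "rep d (\<lambda>y. partial i f y + partial i g y)" using rep_add.IH i by (auto intro: rep.rep_add)
    then show "rep d (partial i (\<lambda>y. f y + g y)) \<and> lined d (\<lambda>y. f y + g y) i"
      using E D unfolding lined_def eqU_def
      by (auto intro: rep.rep_cong[OF _ eqU_sym[OF E]])
  qed
next
  case (rep_mult f g)
  show ?case
  proof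
    fix i assume i: "i \<in> {1..d}"
    have D: "((\<lambda>t. f (y(i:=t)) * g (y(i:=t))) has_real_derivative partial i f y * g y + f y * partial i g y) (at (y i))"
      if y: "y \<in> simplex_interior d" for y
    proof -
      have a: "((\<lambda>t. f (y(i:=t))) has_real_derivative partial i f y) (at (y i))"
        using rep_mult.IH i y unfolding lined_def by auto
      have b: "((\<lambda>t. g (y(i:=t))) has_real_derivative partial i g y) (at (y i))"
        using rep_mult.IH i y unfolding lined_def by auto
      show ?thesis using DERIV_mult[OF a b] by (simp add: algebra_simps)
    qed
    have E: "eqU d (partial i (\<lambda>y. f y * g y)) (\<lambda>y. partial i f y * g y + f y * partial i g y)"
      unfolding eqU_def by (auto intro!: partial_eqI[where f="\<lambda>y. f y * g y"] D)
    have "rep d (\<lambda>y. partial i f y * g y + f y * partial i g y)" using rep_mult i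
      by (auto intro!: rep.rep_add rep.rep_mult)
    then show "rep d (partial i (\<lambda>y. f y * g y)) \<and> lined d (\<lambda>y. f y * g y) i"
      using E D unfolding lined_def eqU_def
      by (auto intro: rep.rep_cong[OF _ eqU_sym[OF E]])
  qed
next
  case (rep_cong f g)
  show ?case
  proof
    fix i assume i: "i \<in> {1..d}"
    have E: "eqU d (partial i g) (partial i f)" using partial_congU[OF eqU_sym[OF rep_cong.hyps(2)] i] .
    have D: "((\<lambda>t. g (y(i:=t))) has_real_derivative partial i g y) (at (y i))"
      if y: "y \<in> simplex_interior d" for y
    proof -
      have ev: "\<forall>\<^sub>F t in nhds (y i). f (y(i:=t)) = g (y(i:=t))"
        using line_in[OF y i] by eventually_elim (use rep_cong.hyps(2) in \<open>auto simp: eqU_def\<close>)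
      have "((\<lambda>t. f (y(i:=t))) has_real_derivative partial i f y) (at (y i))"
        using rep_cong.IH i y unfolding lined_def by auto
      then show ?thesis using DERIV_cong_ev[OF refl ev refl] E y unfolding eqU_def by simp
    qed
    show "rep d (partial i g) \<and> lined d g i"
      using D rep_cong.IH i E unfolding lined_def
      by (auto intro: rep.rep_cong[OF _ eqU_sym[OF E]])
  qed
qed



lemma rep_partial1: "rep d f \<Longrightarrow> i \<in> {1..d} \<Longrightarrow> rep d (partial i f)"
  using rep_partial by blast
lemma rep_lined: "rep d f \<Longrightarrow> i \<in> {1..d} \<Longrightarrow> y \<in> simplex_interior d \<Longrightarrow>
   ((\<lambda>t. f (y(i:=t))) has_real_derivative partial i f y) (at (y i))"
  using rep_partial unfolding lined_def by blast

lemma partial_const[simp]: "partial i (\<lambda>y. c) = (\<lambda>y. 0)"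
  by (rule ext, rule partial_eqI) simp

lemma partial_add:
  assumes "rep d f" "rep d g" "i \<in> {1..d}"
  shows "eqU d (partial i (\<lambda>y. f y + g y)) (\<lambda>y. partial i f y + partial i g y)"
  unfolding eqU_def
  by (auto intro!: partial_eqI[where f="\<lambda>y. f y + g y"] DERIV_add rep_lined assms)

lemma partial_mult:
  assumes "rep d f" "rep d g" "i \<in> {1..d}"
  shows "eqU d (partial i (\<lambda>y. f y * g y)) (\<lambda>y. partial i f y * g y + f y * partial i g y)"
  unfolding eqU_def
proof
  fix y assume y: "y \<in> simplex_interior d"
  have a: "((\<lambda>t. f (y(i:=t))) has_real_derivative partial i f y) (at (y i))"
    using rep_lined assms y by blast
  have b: "((\<lambda>t. g (y(i:=t))) has_real_derivative partial i g y) (at (y i))"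
    using rep_lined assms y by blast
  show "partial i (\<lambda>y. f y * g y) y = partial i f y * g y + f y * partial i g y"
    by (rule partial_eqI[where f="\<lambda>y. f y * g y"]) (use DERIV_mult[OF a b] in \<open>simp add: algebra_simps\<close>)
qed

lemma rep_cmult: "rep d f \<Longrightarrow> rep d (\<lambda>y. c * f y)"
  by (rule rep_mult[OF rep_const])

lemma partial_cmult:
  assumes "rep d f" "i \<in> {1..d}"
  shows "eqU d (partial i (\<lambda>y. c * f y)) (\<lambda>y. c * partial i f y)"
  using partial_mult[OF rep_const assms] by (simp add: eqU_def)

lemma rep_diff: "rep d f \<Longrightarrow> rep d g \<Longrightarrow> rep d (\<lambda>y. f y - g y)"
  using rep_add[OF _ rep_cmult[of d g "-1"], of f] by simp

lemma partial_diff: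
  assumes "rep d f" "rep d g" "i \<in> {1..d}"
  shows "eqU d (partial i (\<lambda>y. f y - g y)) (\<lambda>y. partial i f y - partial i g y)"
  using partial_add[OF assms(1) rep_cmult[OF assms(2)] assms(3), of "-1"]
    partial_cmult[OF assms(2,3), of "-1"] by (simp add: eqU_def)

lemma rep_sum: "finite A \<Longrightarrow> (\<And>a. a \<in> A \<Longrightarrow> rep d (f a)) \<Longrightarrow> rep d (\<lambda>y. \<Sum>a\<in>A. f a y)"
proof (induction A rule: finite_induct)
  case empty then show ?case using rep_const[of d 0] by simp
next
  case (insert x F) then show ?case using rep_add[of d "f x" "\<lambda>y. \<Sum>a\<in>F. f a y"] by simp
qed

lemma partial_sum:
  assumes "finite A" "\<And>a. a \<in> A \<Longrightarrow> rep d (f a)" "i \<in> {1..d}"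
  shows "eqU d (partial i (\<lambda>y. \<Sum>a\<in>A. f a y)) (\<lambda>y. \<Sum>a\<in>A. partial i (f a) y)"
  using assms(1,2)
proof (induction A rule: finite_induct)
  case empty then show ?case by (simp add: eqU_def)
next
  case (insert x F)
  have "eqU d (partial i (\<lambda>y. f x y + (\<Sum>a\<in>F. f a y))) (\<lambda>y. partial i (f x) y + partial i (\<lambda>y. \<Sum>a\<in>F. f a y) y)"
    by (rule partial_add) (use insert assms(3) in \<open>auto intro: rep_sum\<close>)
  with insert show ?case by (simp add: eqU_def)
qed

lemma rep_prod: "finite A \<Longrightarrow> (\<And>a. a \<in> A \<Longrightarrow> rep d (f a)) \<Longrightarrow> rep d (\<lambda>y. \<Prod>a\<in>A. f a y)"
proof (induction A rule: finite_induct)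
  case empty then show ?case using rep_const[of d 1] by simp
next
  case (insert x F) then show ?case using rep_mult[of d "f x" "\<lambda>y. \<Prod>a\<in>F. f a y"] by simp
qed

lemma partial_coord:
  assumes l: "l \<in> {1..d}" and i: "i \<in> {1..d}"
  shows "eqU d (partial i (\<lambda>y. y l powr e)) (\<lambda>y. if i = l then e * y l powr (e - 1) else 0)"
  unfolding eqU_def
proof
  fix y assume y: "y \<in> simplex_interior d"
  show "partial i (\<lambda>y. y l powr e) y = (if i = l then e * y l powr (e - 1) else 0)"
  proof (rule partial_eqI[where f="\<lambda>y. y l powr e"], cases "i = l")
    case True
    then show "((\<lambda>t. (y(i:=t)) l powr e) has_real_derivative (if i = l then e * y l powr (e - 1) else 0)) (at (y i))"
      using has_real_derivative_powr[OF U_pos[OF y i], of e] by simp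
  next
    case False
    then show "((\<lambda>t. (y(i:=t)) l powr e) has_real_derivative (if i = l then e * y l powr (e - 1) else 0)) (at (y i))"
      by simp
  qed
qed

lemma partial_lin:
  assumes i: "i \<in> {1..d}"
  shows "eqU d (partial i (\<lambda>y. (1 - abs_pt d y) powr b)) (\<lambda>y. - b * (1 - abs_pt d y) powr (b - 1))"
  unfolding eqU_def
proof
  fix y assume y: "y \<in> simplex_interior d"
  have "((\<lambda>t. (1 - (abs_pt d y - y i + t)) powr b) has_real_derivative
          b * (1 - (abs_pt d y - y i + y i)) powr (b - of_nat 1) * (-1)) (at (y i))"
    by (rule DERIV_fun_powr) (use U_lin[OF y] in \<open>auto intro!: derivative_eq_intros\<close>)
  then show "partial i (\<lambda>y. (1 - abs_pt d y) powr b) y = - b * (1 - abs_pt d y) powr (b - 1)"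
    by (intro partial_eqI[where f="\<lambda>y. (1 - abs_pt d y) powr b"]) (simp add: abs_pt_upd[OF i])
qed

lemma partial_indep:
  assumes "\<And>y t. f (y(i:=t)) = f y"
  shows "partial i f = (\<lambda>y. 0)"
  by (rule ext, rule partial_eqI) (simp add: assms)

lemma comm_add:
  assumes f: "rep d f" and g: "rep d g" and i: "i \<in> {1..d}" and j: "j \<in> {1..d}"
  shows "eqU d (partial i (partial j (\<lambda>y. f y + g y))) (\<lambda>y. partial i (partial j f) y + partial i (partial j g) y)"
proof -
  have 1: "eqU d (partial i (partial j (\<lambda>y. f y + g y))) (partial i (\<lambda>y. partial j f y + partial j g y))"
    by (rule partial_congU[OF partial_add[OF f g j] i])
  have 2: "eqU d (partial i (\<lambda>y. partial j f y + partial j g y)) (\<lambda>y. partial i (partial j f) y + partial i (partial j g) y)"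
    by (rule partial_add[OF rep_partial1[OF f j] rep_partial1[OF g j] i])
  show ?thesis using 1 2 by (rule eqU_trans)
qed

lemma comm_mult:
  assumes f: "rep d f" and g: "rep d g" and i: "i \<in> {1..d}" and j: "j \<in> {1..d}"
  shows "eqU d (partial i (partial j (\<lambda>y. f y * g y)))
     (\<lambda>y. partial i (partial j f) y * g y + partial j f y * partial i g y + partial i f y * partial j g y + f y * partial i (partial j g) y)"
proof -
  note fj = rep_partial1[OF f j] and gj = rep_partial1[OF g j]
  have 1: "eqU d (partial i (partial j (\<lambda>y. f y * g y))) (partial i (\<lambda>y. partial j f y * g y + f y * partial j g y))"
    by (rule partial_congU[OF partial_mult[OF f g j] i])
  have 2: "eqU d (partial i (\<lambda>y. partial j f y * g y + f y * partial j g y)) 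
     (\<lambda>y. partial i (\<lambda>y. partial j f y * g y) y + partial i (\<lambda>y. f y * partial j g y) y)"
    by (rule partial_add[OF rep_mult[OF fj g] rep_mult[OF f gj] i])
  have 3: "eqU d (partial i (\<lambda>y. partial j f y * g y)) (\<lambda>y. partial i (partial j f) y * g y + partial j f y * partial i g y)"
    by (rule partial_mult[OF fj g i])
  have 4: "eqU d (partial i (\<lambda>y. f y * partial j g y)) (\<lambda>y. partial i f y * partial j g y + f y * partial i (partial j g) y)"
    by (rule partial_mult[OF f gj i])
  show ?thesis using 1 2 3 4 unfolding eqU_def by (simp add: algebra_simps)
qed

lemma partial_comm:
  assumes "rep d f"
  shows "\<forall>i\<in>{1..d}. \<forall>j\<in>{1..d}. eqU d (partial i (partial j f)) (partial j (partial i f))"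
  using assms
proof induction
  case (rep_const c) then show ?case by simp
next
  case (rep_coord l e)
  show ?case
  proof (intro ballI)
    fix i j assume i: "i \<in> {1..d}" and j: "j \<in> {1..d}"
    have gen: "eqU d (partial i (partial j (\<lambda>y. y l powr e)))
       (\<lambda>y. if i = l \<and> j = l then e * ((e - 1) * y l powr (e - 1 - 1)) else 0)"
      if i: "i \<in> {1..d}" and j: "j \<in> {1..d}" for i j
    proof -
      have 1: "eqU d (partial i (partial j (\<lambda>y. y l powr e))) (partial i (\<lambda>y. if j = l then e * y l powr (e - 1) else 0))"
        by (rule partial_congU[OF partial_coord[OF rep_coord j] i])
      show ?thesis
      proof (cases "j = l")
        case True
        have 2: "eqU d (partial i (\<lambda>y. e * y l powr (e - 1))) (\<lambda>y. e * partial i (\<lambda>y. y l powr (e - 1)) y)"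
          by (rule partial_cmult[OF rep.rep_coord[OF rep_coord] i])
        have 3: "eqU d (partial i (\<lambda>y. y l powr (e - 1))) (\<lambda>y. if i = l then (e - 1) * y l powr (e - 1 - 1) else 0)"
          by (rule partial_coord[OF rep_coord i])
        show ?thesis using 1 2 3 True unfolding eqU_def by auto
      next
        case False
        then show ?thesis using 1 unfolding eqU_def by auto
      qed
    qed
    show "eqU d (partial i (partial j (\<lambda>y. y l powr e))) (partial j (partial i (\<lambda>y. y l powr e)))"
      using gen[OF i j] gen[OF j i] unfolding eqU_def by auto
  qed
next
  case (rep_lin b)
  show ?case
  proof (intro ballI)
    fix i j assume i: "i \<in> {1..d}" and j: "j \<in> {1..d}"
    have gen: "eqU d (partial i (partial j (\<lambda>y. (1 - abs_pt d y) powr b)))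
       (\<lambda>y. - b * (- (b - 1) * (1 - abs_pt d y) powr (b - 1 - 1)))"
      if i: "i \<in> {1..d}" and j: "j \<in> {1..d}" for i j
    proof -
      have 1: "eqU d (partial i (partial j (\<lambda>y. (1 - abs_pt d y) powr b))) (partial i (\<lambda>y. - b * (1 - abs_pt d y) powr (b - 1)))"
        by (rule partial_congU[OF partial_lin[OF j] i])
      have 2: "eqU d (partial i (\<lambda>y. - b * (1 - abs_pt d y) powr (b - 1))) (\<lambda>y. - b * partial i (\<lambda>y. (1 - abs_pt d y) powr (b - 1)) y)"
        by (rule partial_cmult[OF rep.rep_lin i])
      have 3: "eqU d (partial i (\<lambda>y. (1 - abs_pt d y) powr (b - 1))) (\<lambda>y. - (b - 1) * (1 - abs_pt d y) powr (b - 1 - 1))"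
        by (rule partial_lin[OF i])
      show ?thesis using 1 2 3 unfolding eqU_def by auto
    qed
    show "eqU d (partial i (partial j (\<lambda>y. (1 - abs_pt d y) powr b))) (partial j (partial i (\<lambda>y. (1 - abs_pt d y) powr b)))"
      using gen[OF i j] gen[OF j i] unfolding eqU_def by auto
  qed
next
  case (rep_add f g)
  show ?case
  proof (intro ballI)
    fix i j assume i: "i \<in> {1..d}" and j: "j \<in> {1..d}"
    show "eqU d (partial i (partial j (\<lambda>y. f y + g y))) (partial j (partial i (\<lambda>y. f y + g y)))"
      using comm_add[OF rep_add.hyps(1,2) i j] comm_add[OF rep_add.hyps(1,2) j i] rep_add.IH i j
      unfolding eqU_def by auto
  qed
next
  case (rep_mult f g)
  show ?case
  proof (intro ballI)
    fix i j assume i: "i \<in> {1..d}" and j: "j \<in> {1..d}"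
    show "eqU d (partial i (partial j (\<lambda>y. f y * g y))) (partial j (partial i (\<lambda>y. f y * g y)))"
      using comm_mult[OF rep_mult.hyps(1,2) i j] comm_mult[OF rep_mult.hyps(1,2) j i] rep_mult.IH i j
      unfolding eqU_def by (auto simp: algebra_simps)
  qed
next
  case (rep_cong f g)
  show ?case
  proof (intro ballI)
    fix i j assume i: "i \<in> {1..d}" and j: "j \<in> {1..d}"
    have a: "eqU d (partial i (partial j g)) (partial i (partial j f))"
      if i: "i \<in> {1..d}" and j: "j \<in> {1..d}" for i j
      by (rule partial_congU[OF partial_congU[OF eqU_sym[OF rep_cong.hyps(2)] j] i])
    show "eqU d (partial i (partial j g)) (partial j (partial i g))"
      using a[OF i j] a[OF j i] rep_cong.IH i j unfolding eqU_def by auto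
  qed
qed

lemma partial_comm1: "rep d f \<Longrightarrow> i \<in> {1..d} \<Longrightarrow> j \<in> {1..d} \<Longrightarrow>
   eqU d (partial i (partial j f)) (partial j (partial i f))"
  using partial_comm by blast



lemma rep_pw: "rep d f \<Longrightarrow> i \<in> {1..d} \<Longrightarrow> rep d ((partial i ^^ k) f)"
  by (induction k) (auto intro: rep_partial1)

lemma pw_cong: "eqU d f g \<Longrightarrow> i \<in> {1..d} \<Longrightarrow> eqU d ((partial i ^^ k) f) ((partial i ^^ k) g)"
  by (induction k) (auto intro: partial_congU)

lemma pw_comm:
  assumes f: "rep d f" and i: "i \<in> {1..d}" and j: "j \<in> {1..d}"
  shows "eqU d ((partial j ^^ k) (partial i f)) (partial i ((partial j ^^ k) f))"
proof (induction k)
  case 0 then show ?case by simp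
next
  case (Suc k)
  have "eqU d (partial j ((partial j ^^ k) (partial i f))) (partial j (partial i ((partial j ^^ k) f)))"
    by (rule partial_congU[OF Suc j])
  also have "eqU d \<dots> (partial i (partial j ((partial j ^^ k) f)))"
    by (rule partial_comm1[OF rep_pw[OF f j] j i])
  finally show ?case by simp
qed

lemma pw_add:
  assumes f: "rep d f" and g: "rep d g" and i: "i \<in> {1..d}"
  shows "eqU d ((partial i ^^ k) (\<lambda>y. f y + g y)) (\<lambda>y. (partial i ^^ k) f y + (partial i ^^ k) g y)"
proof (induction k)
  case 0 then show ?case by simp
next
  case (Suc k)
  have "eqU d (partial i ((partial i ^^ k) (\<lambda>y. f y + g y))) (partial i (\<lambda>y. (partial i ^^ k) f y + (partial i ^^ k) g y))"
    by (rule partial_congU[OF Suc i])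
  also have "eqU d \<dots> (\<lambda>y. partial i ((partial i ^^ k) f) y + partial i ((partial i ^^ k) g) y)"
    by (rule partial_add[OF rep_pw[OF f i] rep_pw[OF g i] i])
  finally show ?case by simp
qed

lemma pw_cmult:
  assumes f: "rep d f" and i: "i \<in> {1..d}"
  shows "eqU d ((partial i ^^ k) (\<lambda>y. c * f y)) (\<lambda>y. c * (partial i ^^ k) f y)"
proof (induction k)
  case 0 then show ?case by simp
next
  case (Suc k)
  have "eqU d (partial i ((partial i ^^ k) (\<lambda>y. c * f y))) (partial i (\<lambda>y. c * (partial i ^^ k) f y))"
    by (rule partial_congU[OF Suc i])
  also have "eqU d \<dots> (\<lambda>y. c * partial i ((partial i ^^ k) f) y)"
    by (rule partial_cmult[OF rep_pw[OF f i] i])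
  finally show ?case by simp
qed

definition FL :: "(nat \<Rightarrow> nat) \<Rightarrow> nat list \<Rightarrow> ((nat \<Rightarrow> real) \<Rightarrow> real) \<Rightarrow> (nat \<Rightarrow> real) \<Rightarrow> real" where
  "FL m L f = foldr (\<lambda>i g. (partial i ^^ m i) g) L f"

lemma FL_Nil[simp]: "FL m [] f = f" and FL_Cons[simp]: "FL m (x#L) f = (partial x ^^ m x) (FL m L f)"
  by (simp_all add: FL_def)

lemma rep_FL: "rep d f \<Longrightarrow> set L \<subseteq> {1..d} \<Longrightarrow> rep d (FL m L f)"
  by (induction L) (auto intro: rep_pw)

lemma FL_cong: "eqU d f g \<Longrightarrow> set L \<subseteq> {1..d} \<Longrightarrow> eqU d (FL m L f) (FL m L g)"
  by (induction L) (auto intro: pw_cong)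

lemma FL_comm:
  assumes f: "rep d f" and i: "i \<in> {1..d}"
  shows "set L \<subseteq> {1..d} \<Longrightarrow> eqU d (FL m L (partial i f)) (partial i (FL m L f))"
proof (induction L)
  case Nil then show ?case by simp
next
  case (Cons x L)
  then have x: "x \<in> {1..d}" and L: "set L \<subseteq> {1..d}" by auto
  have "eqU d ((partial x ^^ m x) (FL m L (partial i f))) ((partial x ^^ m x) (partial i (FL m L f)))"
    by (rule pw_cong[OF Cons.IH[OF L] x])
  also have "eqU d \<dots> (partial i ((partial x ^^ m x) (FL m L f)))"
    by (rule pw_comm[OF rep_FL[OF f L] i x])
  finally show ?case by simp
qed

lemma FL_agree: "(\<forall>x\<in>set L. m x = m' x) \<Longrightarrow> FL m L f = FL m' L f"
  by (induction L) auto

lemma FL_suc: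
  assumes f: "rep d f"
  shows "distinct L \<Longrightarrow> set L \<subseteq> {1..d} \<Longrightarrow> i \<in> set L \<Longrightarrow>
    eqU d (FL (m(i:=Suc (m i))) L f) (partial i (FL m L f))"
proof (induction L)
  case Nil then show ?case by simp
next
  case (Cons x L)
  then have x: "x \<in> {1..d}" and L: "set L \<subseteq> {1..d}" and i: "i \<in> {1..d}" by auto
  show ?case
  proof (cases "x = i")
    case True
    then have "i \<notin> set L" using Cons.prems by auto
    then have "FL (m(i:=Suc (m i))) L f = FL m L f" by (intro FL_agree) auto
    then show ?thesis using True by (simp del: fun_upd_apply) simp
  next
    case False
    then have iL: "i \<in> set L" using Cons.prems by auto
    have "eqU d ((partial x ^^ m x) (FL (m(i:=Suc (m i))) L f)) ((partial x ^^ m x) (partial i (FL m L f)))"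
      by (rule pw_cong[OF Cons.IH x]) (use Cons.prems iL in auto)
    also have "eqU d \<dots> (partial i ((partial x ^^ m x) (FL m L f)))"
      by (rule pw_comm[OF rep_FL[OF f L] i x])
    finally show ?thesis using False by (simp add: fun_upd_other del: fun_upd_apply)
  qed
qed

lemma FL_add:
  assumes f: "rep d f" and g: "rep d g"
  shows "set L \<subseteq> {1..d} \<Longrightarrow> eqU d (FL m L (\<lambda>y. f y + g y)) (\<lambda>y. FL m L f y + FL m L g y)"
proof (induction L)
  case Nil then show ?case by simp
next
  case (Cons x L)
  then have x: "x \<in> {1..d}" and L: "set L \<subseteq> {1..d}" by auto
  have "eqU d ((partial x ^^ m x) (FL m L (\<lambda>y. f y + g y))) ((partial x ^^ m x) (\<lambda>y. FL m L f y + FL m L g y))"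
    by (rule pw_cong[OF Cons.IH[OF L] x])
  also have "eqU d \<dots> (\<lambda>y. (partial x ^^ m x) (FL m L f) y + (partial x ^^ m x) (FL m L g) y)"
    by (rule pw_add[OF rep_FL[OF f L] rep_FL[OF g L] x])
  finally show ?case by simp
qed

lemma FL_cmult:
  assumes f: "rep d f"
  shows "set L \<subseteq> {1..d} \<Longrightarrow> eqU d (FL m L (\<lambda>y. c * f y)) (\<lambda>y. c * FL m L f y)"
proof (induction L)
  case Nil then show ?case by simp
next
  case (Cons x L)
  then have x: "x \<in> {1..d}" and L: "set L \<subseteq> {1..d}" by auto
  have "eqU d ((partial x ^^ m x) (FL m L (\<lambda>y. c * f y))) ((partial x ^^ m x) (\<lambda>y. c * FL m L f y))"
    by (rule pw_cong[OF Cons.IH[OF L] x])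
  also have "eqU d \<dots> (\<lambda>y. c * (partial x ^^ m x) (FL m L f) y)"
    by (rule pw_cmult[OF rep_FL[OF f L] x])
  finally show ?case by simp
qed

lemma mpartial_FL: "mpartial d m f = FL m [1..<d+1] f"
  by (simp add: mpartial_def FL_def)

lemma setL: "set [1..<d+1] \<subseteq> {1..d}" by auto

lemma rep_Dm: "rep d f \<Longrightarrow> rep d (mpartial d m f)"
  unfolding mpartial_FL by (rule rep_FL[OF _ setL])

lemma Dm_cong: "eqU d f g \<Longrightarrow> eqU d (mpartial d m f) (mpartial d m g)"
  unfolding mpartial_FL by (rule FL_cong[OF _ setL])

lemma Dm_comm: "rep d f \<Longrightarrow> i \<in> {1..d} \<Longrightarrow> eqU d (mpartial d m (partial i f)) (partial i (mpartial d m f))"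
  unfolding mpartial_FL by (rule FL_comm[OF _ _ setL])

lemma Dm_suc: "rep d f \<Longrightarrow> i \<in> {1..d} \<Longrightarrow> eqU d (mpartial d (m(i:=Suc (m i))) f) (partial i (mpartial d m f))"
  unfolding mpartial_FL by (rule FL_suc) auto

lemma Dm_add: "rep d f \<Longrightarrow> rep d g \<Longrightarrow> eqU d (mpartial d m (\<lambda>y. f y + g y)) (\<lambda>y. mpartial d m f y + mpartial d m g y)"
  unfolding mpartial_FL by (rule FL_add[OF _ _ setL])

lemma Dm_cmult: "rep d f \<Longrightarrow> eqU d (mpartial d m (\<lambda>y. c * f y)) (\<lambda>y. c * mpartial d m f y)"
  unfolding mpartial_FL by (rule FL_cmult[OF _ setL])

lemma Dm_diff: "rep d f \<Longrightarrow> rep d g \<Longrightarrow> eqU d (mpartial d m (\<lambda>y. f y - g y)) (\<lambda>y. mpartial d m f y - mpartial d m g y)"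
  using Dm_add[of d f "\<lambda>y. (-1) * g y" m] Dm_cmult[of d g m "-1"] rep_cmult[of d g "-1"]
  unfolding eqU_def by simp

lemma Dm_sum: "finite A \<Longrightarrow> (\<And>a. a \<in> A \<Longrightarrow> rep d (f a)) \<Longrightarrow>
   eqU d (mpartial d m (\<lambda>y. \<Sum>a\<in>A. f a y)) (\<lambda>y. \<Sum>a\<in>A. mpartial d m (f a) y)"
proof (induction A rule: finite_induct)
  case empty
  then show ?case using Dm_cmult[OF rep_const[of d 1], of m 0] by (simp add: eqU_def)
next
  case (insert x F)
  have "eqU d (mpartial d m (\<lambda>y. f x y + (\<Sum>a\<in>F. f a y))) (\<lambda>y. mpartial d m (f x) y + mpartial d m (\<lambda>y. \<Sum>a\<in>F. f a y) y)"
    by (rule Dm_add) (use insert in \<open>auto intro: rep_sum\<close>)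
  with insert show ?case by (simp add: eqU_def)
qed

lemma Dm_zero: "(\<forall>l\<in>{1..d}. m l = 0) \<Longrightarrow> mpartial d m f = f"
proof -
  assume "\<forall>l\<in>{1..d}. m l = 0"
  then have "FL m L f = f" if "set L \<subseteq> {1..d}" for L using that by (induction L) auto
  then show ?thesis unfolding mpartial_FL using setL by blast
qed

definition dec :: "(nat \<Rightarrow> nat) \<Rightarrow> nat \<Rightarrow> (nat \<Rightarrow> nat)" where
  "dec m i = m(i := m i - 1)"

lemma dec_suc: "1 \<le> m i \<Longrightarrow> (dec m i)(i := Suc (dec m i i)) = m"
  by (auto simp: dec_def)

lemma Dm_dec: "rep d f \<Longrightarrow> i \<in> {1..d} \<Longrightarrow> 1 \<le> m i \<Longrightarrow>
   eqU d (mpartial d m f) (partial i (mpartial d (dec m i) f))"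
  using Dm_suc[of d f i "dec m i"] by (simp add: dec_suc)

lemma Dm_dec': "rep d f \<Longrightarrow> i \<in> {1..d} \<Longrightarrow> 1 \<le> m i \<Longrightarrow>
   eqU d (mpartial d m f) (mpartial d (dec m i) (partial i f))"
  using Dm_dec[of d f i m] Dm_comm[of d f i "dec m i"] unfolding eqU_def by simp



lemma abs_idx_zero: "abs_idx d m = 0 \<Longrightarrow> \<forall>l\<in>{1..d}. m l = 0"
  unfolding abs_idx_def by simp

lemma abs_idx_dec: "i \<in> {1..d} \<Longrightarrow> 1 \<le> m i \<Longrightarrow> abs_idx d m = Suc (abs_idx d (dec m i))"
proof -
  assume i: "i \<in> {1..d}" and mi: "1 \<le> m i"
  have "abs_idx d m = m i + (\<Sum>j\<in>{1..d}-{i}. m j)" unfolding abs_idx_def using i by (subst sum.remove) auto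
  moreover have "(\<Sum>j\<in>{1..d}-{i}. dec m i j) = (\<Sum>j\<in>{1..d}-{i}. m j)"
    by (rule sum.cong) (auto simp: dec_def)
  moreover have "abs_idx d (dec m i) = dec m i i + (\<Sum>j\<in>{1..d}-{i}. dec m i j)"
    unfolding abs_idx_def using i by (subst sum.remove) auto
  ultimately show ?thesis using mi by (simp add: dec_def)
qed

lemma exists_pos: "abs_idx d m \<noteq> 0 \<Longrightarrow> \<exists>i\<in>{1..d}. 1 \<le> m i"
  unfolding abs_idx_def by (metis (mono_tags, lifting) less_one not_le sum.neutral)

lemma dec_dec_suc: "1 \<le> m i \<Longrightarrow> 1 \<le> dec m i l \<Longrightarrow> (dec (dec m i) l)(i := Suc (dec (dec m i) l i)) = dec m l"
  by (auto simp: dec_def fun_eq_iff)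

lemma sum_dec_split:
  assumes i: "i \<in> {1..d}" and mi: "1 \<le> m i"
  shows "(\<Sum>l=1..d. real (m l) * X l) = (\<Sum>l=1..d. real (dec m i l) * X l) + X i"
proof -
  have "real (m l) = real (dec m i l) + (if l = i then 1 else 0)" for l
    using mi by (auto simp: dec_def)
  then have "(\<Sum>l=1..d. real (m l) * X l) = (\<Sum>l=1..d. real (dec m i l) * X l + (if l = i then X l else 0))"
    by (intro sum.cong) (auto simp: algebra_simps)
  also have "\<dots> = (\<Sum>l=1..d. real (dec m i l) * X l) + X i"
    using i by (simp add: sum.distrib)
  finally show ?thesis .
qed

lemma leibniz_lin:
  assumes f: "rep d f" and ell: "rep d L0" and dl: "\<And>l. l \<in> {1..d} \<Longrightarrow> eqU d (partial l L0) (\<lambda>y. c l)"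
  shows "eqU d (mpartial d m (\<lambda>y. L0 y * f y))
     (\<lambda>y. L0 y * mpartial d m f y + (\<Sum>l=1..d. real (m l) * (c l * mpartial d (dec m l) f y)))"
proof (induction "abs_idx d m" arbitrary: m)
  case 0
  then have z: "\<forall>l\<in>{1..d}. m l = 0" by (simp add: abs_idx_zero)
  then show ?case by (simp add: Dm_zero)
next
  case (Suc N)
  then obtain i where i: "i \<in> {1..d}" and mi: "1 \<le> m i" using exists_pos by (metis nat.distinct(1))
  define m' where "m' = dec m i"
  have N: "N = abs_idx d m'" using Suc.hyps(2) abs_idx_dec[of i d m, OF i mi] by (simp add: m'_def)
  note IH = Suc.hyps(1)[OF N]
  define S where "S = (\<lambda>y. \<Sum>l=1..d. real (m' l) * (c l * mpartial d (dec m' l) f y))"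
  have repS: "rep d S" unfolding S_def by (intro rep_sum rep_cmult rep_Dm f) auto
  have repl: "rep d (\<lambda>y. L0 y * mpartial d m' f y)" by (intro rep_mult ell rep_Dm f)
  show ?case unfolding eqU_def
  proof
    fix y assume y: "y \<in> simplex_interior d"
    have A: "mpartial d m (\<lambda>y. L0 y * f y) y = partial i (mpartial d m' (\<lambda>y. L0 y * f y)) y"
      using Dm_dec[of d "\<lambda>y. L0 y * f y" i m, OF rep_mult[OF ell f] i mi] y unfolding m'_def eqU_def by blast
    have B: "partial i (mpartial d m' (\<lambda>y. L0 y * f y)) y = partial i (\<lambda>y. L0 y * mpartial d m' f y + S y) y"
      using partial_congU[OF IH i] y unfolding S_def eqU_def by blast
    have C: "partial i (\<lambda>y. L0 y * mpartial d m' f y + S y) y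
         = partial i (\<lambda>y. L0 y * mpartial d m' f y) y + partial i S y"
      using partial_add[OF repl repS i] y unfolding eqU_def by blast
    have D: "partial i (\<lambda>y. L0 y * mpartial d m' f y) y = c i * mpartial d m' f y + L0 y * partial i (mpartial d m' f) y"
      using partial_mult[OF ell rep_Dm[OF f] i] dl[OF i] y unfolding eqU_def by simp
    have E: "partial i (mpartial d m' f) y = mpartial d m f y"
      using Dm_dec[of d f i m, OF f i mi] y unfolding m'_def eqU_def by simp
    have F1: "partial i S y = (\<Sum>l=1..d. partial i (\<lambda>y. real (m' l) * (c l * mpartial d (dec m' l) f y)) y)"
    proof -
      have rs: "rep d (\<lambda>y. real (m' l) * (c l * mpartial d (dec m' l) f y))" if "l \<in> {1..d}" for l
        by (intro rep_cmult rep_Dm f)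
      show ?thesis using partial_sum[of "{1..d}" d "\<lambda>l y. real (m' l) * (c l * mpartial d (dec m' l) f y)" i, OF _ rs i] y
        unfolding S_def eqU_def by auto
    qed
    have F2: "partial i (\<lambda>y. real (m' l) * (c l * mpartial d (dec m' l) f y)) y
        = real (m' l) * (c l * mpartial d (dec m l) f y)" if l: "l \<in> {1..d}" for l
    proof (cases "1 \<le> m' l")
      case True
      have "partial i (\<lambda>y. (real (m' l) * c l) * mpartial d (dec m' l) f y) y
          = (real (m' l) * c l) * partial i (mpartial d (dec m' l) f) y"
        using partial_cmult[OF rep_Dm[OF f] i] y unfolding eqU_def by blast
      moreover have "partial i (mpartial d (dec m' l) f) y = mpartial d (dec m l) f y"
        using Dm_suc[OF f i, of "dec m' l"] dec_dec_suc[of m i l, OF mi True[unfolded m'_def]] y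
        unfolding eqU_def m'_def by metis
      ultimately show ?thesis by (simp add: algebra_simps)
    next
      case False
      then have "m' l = 0" by simp
      then show ?thesis by simp
    qed
    have F: "partial i S y = (\<Sum>l=1..d. real (m' l) * (c l * mpartial d (dec m l) f y))"
      using F1 F2 by simp
    have G: "(\<Sum>l=1..d. real (m l) * (c l * mpartial d (dec m l) f y))
       = (\<Sum>l=1..d. real (m' l) * (c l * mpartial d (dec m l) f y)) + c i * mpartial d m' f y"
      using sum_dec_split[of i d m, OF i mi, of "\<lambda>l. c l * mpartial d (dec m l) f y"] by (simp add: m'_def)
    show "mpartial d m (\<lambda>y. L0 y * f y) y = L0 y * mpartial d m f y + (\<Sum>l=1..d. real (m l) * (c l * mpartial d (dec m l) f y))"
      using A B C D E F G by simp
  qed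
qed



definition mon :: "nat \<Rightarrow> (nat \<Rightarrow> real) \<Rightarrow> real \<Rightarrow> (nat \<Rightarrow> real) \<Rightarrow> real" where
  "mon d a b = (\<lambda>y. (\<Prod>i=1..d. y i powr a i) * (1 - abs_pt d y) powr b)"

lemma rep_mon: "rep d (mon d a b)"
  unfolding mon_def by (intro rep_mult rep_prod rep_coord rep_lin) auto

lemma mon_cong: "(\<forall>l\<in>{1..d}. a l = a' l) \<Longrightarrow> b = b' \<Longrightarrow> mon d a b = mon d a' b'"
  unfolding mon_def by (intro ext arg_cong2[where f="(*)"] prod.cong) auto

lemma Dm_idx_cong: "(\<forall>l\<in>{1..d}. m l = m' l) \<Longrightarrow> mpartial d m = mpartial d m'"
  unfolding mpartial_FL by (intro ext FL_agree) auto

lemma prod_split_i: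
  fixes d i :: nat
  assumes i: "i \<in> {1..d}"
  shows "(\<Prod>l=1..d. g l) = g i * (\<Prod>l\<in>{1..d}-{i}. g l)"
  using i by (subst prod.remove[of "{1..d}" i]) auto

lemma partial_mon:
  assumes i: "i \<in> {1..d}"
  shows "eqU d (partial i (mon d a b)) (\<lambda>y. a i * mon d (a(i := a i - 1)) b y - b * mon d a (b - 1) y)"
  unfolding eqU_def
proof
  fix y assume y: "y \<in> simplex_interior d"
  define C where "C = (\<Prod>l\<in>{1..d}-{i}. y l powr a l)"
  define S where "S = abs_pt d y - y i"
  have line: "mon d a b (y(i:=t)) = C * (t powr a i * (1 - (S + t)) powr b)" for t
  proof -
    have "(\<Prod>l\<in>{1..d}-{i}. (y(i:=t)) l powr a l) = C" unfolding C_def by (rule prod.cong) auto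
    then show ?thesis unfolding mon_def using prod_split_i[OF i, of "\<lambda>l. (y(i:=t)) l powr a l"]
      by (simp add: abs_pt_upd[OF i] S_def algebra_simps)
  qed
  have pos: "0 < y i" using U_pos[OF y i] .
  have Lpos: "0 < 1 - (S + y i)" using U_lin[OF y] by (simp add: S_def)
  have d1: "((\<lambda>t. t powr a i) has_real_derivative a i * y i powr (a i - 1)) (at (y i))"
    by (rule has_real_derivative_powr[OF pos])
  have d2: "((\<lambda>t. (1 - (S + t)) powr b) has_real_derivative b * (1 - (S + y i)) powr (b - of_nat 1) * (-1)) (at (y i))"
    by (rule DERIV_fun_powr) (use Lpos in \<open>auto intro!: derivative_eq_intros\<close>)
  have D: "((\<lambda>t. C * (t powr a i * (1 - (S + t)) powr b)) has_real_derivative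
      C * (y i powr a i * (b * (1 - (S + y i)) powr (b - of_nat 1) * (-1)) + a i * y i powr (a i - 1) * (1 - (S + y i)) powr b)) (at (y i))"
    using DERIV_cmult[OF DERIV_mult[OF d1 d2], of C] by (simp add: algebra_simps)
  have v1: "mon d (a(i := a i - 1)) b y = C * (y i powr (a i - 1) * (1 - (S + y i)) powr b)"
  proof -
    have "(\<Prod>l\<in>{1..d}-{i}. y l powr (a(i := a i - 1)) l) = C" unfolding C_def by (rule prod.cong) auto
    then show ?thesis unfolding mon_def using prod_split_i[OF i, of "\<lambda>l. y l powr (a(i := a i - 1)) l"]
      by (simp add: S_def algebra_simps)
  qed
  have v2: "mon d a (b - 1) y = C * (y i powr a i * (1 - (S + y i)) powr (b - 1))"
    unfolding mon_def C_def using prod_split_i[OF i, of "\<lambda>l. y l powr a l"]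
    by (simp add: S_def algebra_simps)
  show "partial i (mon d a b) y = a i * mon d (a(i := a i - 1)) b y - b * mon d a (b - 1) y"
    unfolding v1 v2
    by (rule partial_eqI[where f="mon d a b"]) (use D in \<open>simp add: line algebra_simps\<close>)
qed

lemma rep_L: "rep d (\<lambda>y. 1 - abs_pt d y)"
  by (rule rep_cong[OF rep_lin[of d 1]]) (unfold eqU_def, use U_lin in force)

lemma partial_L: "i \<in> {1..d} \<Longrightarrow> eqU d (partial i (\<lambda>y. 1 - abs_pt d y)) (\<lambda>y. -1)"
proof -
  assume i: "i \<in> {1..d}"
  have "eqU d (\<lambda>y. 1 - abs_pt d y) (\<lambda>y. (1 - abs_pt d y) powr 1)" unfolding eqU_def using U_lin by force
  show ?thesis unfolding eqU_def
  proof
    fix y assume y: "y \<in> simplex_interior d"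
    have "partial i (\<lambda>y. 1 - abs_pt d y) y = partial i (\<lambda>y. (1 - abs_pt d y) powr 1) y"
      using partial_congU[OF \<open>eqU d _ _\<close> i] y unfolding eqU_def by blast
    also have "\<dots> = - 1 * (1 - abs_pt d y) powr (1 - 1)"
      using partial_lin[OF i, of 1] y unfolding eqU_def by blast
    also have "\<dots> = -1" using U_lin'[OF y] by simp
    finally show "partial i (\<lambda>y. 1 - abs_pt d y) y = -1" .
  qed
qed

lemma mon_L: "eqU d (mon d a b) (\<lambda>y. (1 - abs_pt d y) * mon d a (b - 1) y)"
  unfolding eqU_def mon_def
proof
  fix y assume y: "y \<in> simplex_interior d"
  have "(1 - abs_pt d y) powr b = (1 - abs_pt d y) * (1 - abs_pt d y) powr (b - 1)"
    using U_lin[OF y] by (simp add: powr_diff)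
  then show "(\<Prod>i = 1..d. y i powr a i) * (1 - abs_pt d y) powr b =
         (1 - abs_pt d y) * ((\<Prod>i = 1..d. y i powr a i) * (1 - abs_pt d y) powr (b - 1))" by simp
qed

lemma sum_m: "(\<Sum>i=1..d. real (m i)) = real (abs_idx d m)"
  by (simp add: abs_idx_def)

lemma K1:
  assumes M: "abs_idx d m \<noteq> 0"
  shows "eqU d (\<lambda>y. (1 - abs_pt d y) * mpartial d m (mon d a (real (abs_idx d m) - 1)) y)
     (\<lambda>y. (1 / real (abs_idx d m)) * (\<Sum>i=1..d. real (m i) * a i * mpartial d (dec m i) (mon d (a(i := a i - 1)) (real (abs_idx d m))) y))"
  unfolding eqU_def
proof
  fix y assume y: "y \<in> simplex_interior d"
  define Mr where "Mr = real (abs_idx d m)"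
  define f where "f = mon d a (Mr - 1)"
  define g where "g = mon d a Mr"
  have Mpos: "Mr \<noteq> 0" using M by (simp add: Mr_def)
  have rf: "rep d f" and rg: "rep d g" unfolding f_def g_def by (rule rep_mon)+
  have trm: "real (m i) * a i * mpartial d (dec m i) (mon d (a(i := a i - 1)) Mr) y
       = real (m i) * (mpartial d m g y + Mr * mpartial d (dec m i) f y)" if i: "i \<in> {1..d}" for i
  proof (cases "1 \<le> m i")
    case False then show ?thesis by simp
  next
    case True
    have e1: "eqU d (\<lambda>y. a i * mon d (a(i := a i - 1)) Mr y) (\<lambda>y. partial i g y + Mr * f y)"
      using partial_mon[OF i, of a Mr] unfolding eqU_def g_def f_def by auto
    have r1: "rep d (\<lambda>y. a i * mon d (a(i := a i - 1)) Mr y)" by (intro rep_cmult rep_mon)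
    have "a i * mpartial d (dec m i) (mon d (a(i := a i - 1)) Mr) y
        = mpartial d (dec m i) (\<lambda>y. a i * mon d (a(i := a i - 1)) Mr y) y"
      using Dm_cmult[OF rep_mon, of d m "a i" "a(i := a i - 1)" Mr]
      using Dm_cmult[of d "mon d (a(i := a i - 1)) Mr" "dec m i" "a i", OF rep_mon] y unfolding eqU_def by simp
    also have "\<dots> = mpartial d (dec m i) (\<lambda>y. partial i g y + Mr * f y) y"
      using Dm_cong[OF e1, of "dec m i"] y unfolding eqU_def by blast
    also have "\<dots> = mpartial d (dec m i) (partial i g) y + mpartial d (dec m i) (\<lambda>y. Mr * f y) y"
      using Dm_add[OF rep_partial1[OF rg i] rep_cmult[OF rf], of "dec m i" Mr] y unfolding eqU_def by blast
    also have "\<dots> = mpartial d m g y + Mr * mpartial d (dec m i) f y"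
      using Dm_dec'[of d g i m, OF rg i True] Dm_cmult[OF rf, of "dec m i" Mr] y unfolding eqU_def by simp
    finally have h: "a i * mpartial d (dec m i) (mon d (a(i := a i - 1)) Mr) y = mpartial d m g y + Mr * mpartial d (dec m i) f y" .
    show ?thesis by (simp only: mult.assoc[of "real (m i)"] h)
  qed
  have LL: "mpartial d m g y = (1 - abs_pt d y) * mpartial d m f y + (\<Sum>l=1..d. real (m l) * (-1 * mpartial d (dec m l) f y))"
  proof -
    have "mpartial d m g y = mpartial d m (\<lambda>y. (1 - abs_pt d y) * f y) y"
      using Dm_cong[OF mon_L[of d a Mr], of m] y unfolding eqU_def g_def f_def by blast
    also have "\<dots> = (1 - abs_pt d y) * mpartial d m f y + (\<Sum>l=1..d. real (m l) * (-1 * mpartial d (dec m l) f y))"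
      using leibniz_lin[OF rf rep_L partial_L, of m] y unfolding eqU_def by blast
    finally show ?thesis .
  qed
  have "(\<Sum>i=1..d. real (m i) * a i * mpartial d (dec m i) (mon d (a(i := a i - 1)) Mr) y)
      = (\<Sum>i=1..d. real (m i) * (mpartial d m g y + Mr * mpartial d (dec m i) f y))"
    by (rule sum.cong) (auto simp: trm)
  also have "\<dots> = Mr * mpartial d m g y + Mr * (\<Sum>i=1..d. real (m i) * mpartial d (dec m i) f y)"
  proof -
    have "(\<Sum>i=1..d. real (m i) * (mpartial d m g y + Mr * mpartial d (dec m i) f y))
        = (\<Sum>i=1..d. real (m i)) * mpartial d m g y + Mr * (\<Sum>i=1..d. real (m i) * mpartial d (dec m i) f y)"
      by (simp add: distrib_left sum.distrib sum_distrib_left sum_distrib_right mult.left_commute)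
    then show ?thesis by (simp only: sum_m Mr_def)
  qed
  also have "\<dots> = Mr * ((1 - abs_pt d y) * mpartial d m f y)"
    by (simp add: LL algebra_simps sum_negf)
  finally show "(1 - abs_pt d y) * mpartial d m (mon d a (real (abs_idx d m) - 1)) y =
      1 / real (abs_idx d m) * (\<Sum>i = 1..d. real (m i) * a i * mpartial d (dec m i) (mon d (a(i := a i - 1)) (real (abs_idx d m))) y)"
    using Mpos by (simp add: Mr_def f_def field_simps)
qed



lemma rep_cpow: "j \<in> {1..d} \<Longrightarrow> rep d (\<lambda>y. y j ^ p)"
  by (rule rep_cong[OF rep_coord[of j d "real p"]]) (auto simp: eqU_def powr_realpow U_pos)

lemma partial_cpow: "partial j (\<lambda>y. y j ^ p) = (\<lambda>y. real p * y j ^ (p - 1))"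
  by (rule ext, rule partial_eqI) (simp add: DERIV_pow)

lemma rep_Y: "j \<in> {1..d} \<Longrightarrow> rep d (\<lambda>y. y j)"
  using rep_cpow[of j d 1] by simp

lemma partial_Y: "partial l (\<lambda>y. y j) = (\<lambda>y. if l = j then 1 else 0)"
proof (rule ext, rule partial_eqI[where f="\<lambda>y. y j"], cases "l = j")
  case True then show "((\<lambda>t. (y(l:=t)) j) has_real_derivative (if l = j then 1 else 0)) (at (y l))" for y by simp
next
  case False then show "((\<lambda>t. (y(l:=t)) j) has_real_derivative (if l = j then 1 else 0)) (at (y l))" for y by simp
qed

lemma Y_times:
  assumes j: "j \<in> {1..d}" and f: "rep d f" and mj: "m j = 0"
  shows "eqU d (mpartial d m (\<lambda>y. y j * f y)) (\<lambda>y. y j * mpartial d m f y)"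
proof -
  have "eqU d (mpartial d m (\<lambda>y. y j * f y))
     (\<lambda>y. y j * mpartial d m f y + (\<Sum>l=1..d. real (m l) * ((if l = j then 1 else 0) * mpartial d (dec m l) f y)))"
    by (rule leibniz_lin[OF f rep_Y[OF j]]) (simp add: partial_Y)
  moreover have "(\<Sum>l=1..d. real (m l) * ((if l = j then 1 else 0) * mpartial d (dec m l) f y)) = 0" for y
    by (rule sum.neutral) (auto simp: mj)
  ultimately show ?thesis by simp
qed

lemma I1:
  assumes j: "j \<in> {1..d}"
  shows "rep d h \<Longrightarrow> m j = Suc p \<Longrightarrow>
    eqU d (\<lambda>y. y j * mpartial d m (\<lambda>y. y j ^ p * h y) y) (mpartial d (dec m j) (\<lambda>y. y j ^ Suc p * partial j h y))"
proof (induction p arbitrary: m h)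
  case 0
  have rh: "rep d (partial j h)" by (rule rep_partial1[OF 0(1) j])
  have a: "eqU d (mpartial d m h) (mpartial d (dec m j) (partial j h))"
    by (rule Dm_dec'[of d h j m, OF 0(1) j]) (simp add: 0(2))
  have b: "eqU d (mpartial d (dec m j) (\<lambda>y. y j * partial j h y)) (\<lambda>y. y j * mpartial d (dec m j) (partial j h) y)"
    by (rule Y_times[OF j rh]) (simp add: dec_def 0(2))
  show ?case using a b unfolding eqU_def by simp
next
  case (Suc p)
  note h = Suc.prems(1)
  define m' where "m' = dec m j"
  have m'j: "m' j = Suc p" using Suc.prems(2) by (simp add: m'_def dec_def)
  define H2 where "H2 = (\<lambda>y. y j * partial j h y)"
  have rh: "rep d (partial j h)" by (rule rep_partial1[OF h j])
  have rhh: "rep d (partial j (partial j h))" by (rule rep_partial1[OF rh j])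
  have rH2: "rep d H2" unfolding H2_def by (intro rep_mult rep_Y j rh)
  have rp: "rep d (\<lambda>y. y j ^ q)" for q by (rule rep_cpow[OF j])
  have rph: "rep d (\<lambda>y. y j ^ q * h y)" for q by (intro rep_mult rp h)
  have rpH: "rep d (\<lambda>y. y j ^ q * H2 y)" for q by (intro rep_mult rp rH2)
  show ?case unfolding eqU_def
  proof
    fix y assume y: "y \<in> simplex_interior d"
    have a: "mpartial d m (\<lambda>y. y j ^ Suc p * h y) y = mpartial d m' (partial j (\<lambda>y. y j ^ Suc p * h y)) y"
      using Dm_dec'[of d "\<lambda>y. y j ^ Suc p * h y" j m, OF rph j] Suc.prems(2) y unfolding m'_def eqU_def by simp
    have b: "eqU d (partial j (\<lambda>y. y j ^ Suc p * h y)) (\<lambda>y. real (Suc p) * (y j ^ p * h y) + y j ^ p * H2 y)"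
      using partial_mult[OF rp h j, of "Suc p"] unfolding eqU_def H2_def partial_cpow by (simp add: algebra_simps)
    have c: "mpartial d m' (\<lambda>y. real (Suc p) * (y j ^ p * h y) + y j ^ p * H2 y) y
       = real (Suc p) * mpartial d m' (\<lambda>y. y j ^ p * h y) y + mpartial d m' (\<lambda>y. y j ^ p * H2 y) y"
      using Dm_add[OF rep_cmult[OF rph] rpH, of m' "real (Suc p)" p p] Dm_cmult[OF rph, of m' "real (Suc p)" p] y
      unfolding eqU_def by simp
    have dd: "y j * mpartial d m' (\<lambda>y. y j ^ p * h y) y = mpartial d (dec m' j) (\<lambda>y. y j ^ Suc p * partial j h y) y"
      using Suc.IH[of h m', OF h m'j] y unfolding eqU_def by blast
    have e: "y j * mpartial d m' (\<lambda>y. y j ^ p * H2 y) y = mpartial d (dec m' j) (\<lambda>y. y j ^ Suc p * partial j H2 y) y"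
      using Suc.IH[of H2 m', OF rH2 m'j] y unfolding eqU_def by blast
    have f: "eqU d (partial j H2) (\<lambda>y. partial j h y + y j * partial j (partial j h) y)"
      using partial_mult[OF rep_Y[OF j] rh j] unfolding H2_def eqU_def partial_Y by simp
    define Q1 where "Q1 = (\<lambda>y. real (Suc p) * (y j ^ Suc p * partial j h y) + y j ^ Suc p * (partial j h y + y j * partial j (partial j h) y))"
    define Q2 where "Q2 = (\<lambda>y. real (Suc (Suc p)) * y j ^ Suc p * partial j h y + y j ^ Suc (Suc p) * partial j (partial j h) y)"
    have rQ1a: "rep d (\<lambda>y. y j ^ Suc p * partial j h y)" by (intro rep_mult rp rh)
    have rQ1b: "rep d (\<lambda>y. y j ^ Suc p * (partial j h y + y j * partial j (partial j h) y))"
      by (intro rep_mult rp rep_add rh rep_Y j rhh)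
    have g: "mpartial d (dec m' j) (\<lambda>y. y j ^ Suc p * partial j H2 y) y
        = mpartial d (dec m' j) (\<lambda>y. y j ^ Suc p * (partial j h y + y j * partial j (partial j h) y)) y"
      using Dm_cong[of d "\<lambda>y. y j ^ Suc p * partial j H2 y" "\<lambda>y. y j ^ Suc p * (partial j h y + y j * partial j (partial j h) y)" "dec m' j"] f y
      unfolding eqU_def by simp
    have L: "y j * mpartial d m (\<lambda>y. y j ^ Suc p * h y) y = mpartial d (dec m' j) Q1 y"
    proof -
      have "y j * mpartial d m (\<lambda>y. y j ^ Suc p * h y) y
          = y j * mpartial d m' (\<lambda>y. real (Suc p) * (y j ^ p * h y) + y j ^ p * H2 y) y"
        using a Dm_cong[OF b, of m'] y unfolding eqU_def by simp
      also have "\<dots> = real (Suc p) * (y j * mpartial d m' (\<lambda>y. y j ^ p * h y) y) + y j * mpartial d m' (\<lambda>y. y j ^ p * H2 y) y"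
        using c by (simp add: algebra_simps)
      also have "\<dots> = real (Suc p) * mpartial d (dec m' j) (\<lambda>y. y j ^ Suc p * partial j h y) y
          + mpartial d (dec m' j) (\<lambda>y. y j ^ Suc p * (partial j h y + y j * partial j (partial j h) y)) y"
        using dd e g by simp
      also have "\<dots> = mpartial d (dec m' j) Q1 y"
        using Dm_add[OF rep_cmult[OF rQ1a] rQ1b, of "dec m' j" "real (Suc p)"] Dm_cmult[OF rQ1a, of "dec m' j" "real (Suc p)"] y
        unfolding eqU_def Q1_def by simp
      finally show ?thesis .
    qed
    have R: "mpartial d (dec m j) (\<lambda>y. y j ^ Suc (Suc p) * partial j h y) y = mpartial d (dec m' j) Q2 y"
    proof -
      have r2: "rep d (\<lambda>y. y j ^ Suc (Suc p) * partial j h y)" by (intro rep_mult rp rh)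
      have "mpartial d (dec m j) (\<lambda>y. y j ^ Suc (Suc p) * partial j h y) y
          = mpartial d (dec m' j) (partial j (\<lambda>y. y j ^ Suc (Suc p) * partial j h y)) y"
        using Dm_dec'[of d _ j m', OF r2 j] m'j y unfolding eqU_def m'_def by simp
      also have "\<dots> = mpartial d (dec m' j) Q2 y"
      proof -
        have "eqU d (partial j (\<lambda>y. y j ^ Suc (Suc p) * partial j h y)) Q2"
          using partial_mult[OF rp rh j, of "Suc (Suc p)"] unfolding eqU_def Q2_def partial_cpow by simp
        from Dm_cong[OF this, of "dec m' j"] y show ?thesis unfolding eqU_def by blast
      qed
      finally show ?thesis .
    qed
    have QQ: "eqU d Q1 Q2" unfolding eqU_def Q1_def Q2_def by (simp add: algebra_simps)
    show "y j * mpartial d m (\<lambda>y. y j ^ Suc p * h y) y = mpartial d (dec m j) (\<lambda>y. y j ^ Suc (Suc p) * partial j h y) y"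
      using L R Dm_cong[OF QQ, of "dec m' j"] y unfolding eqU_def by simp
  qed
qed



fun subL :: "(nat \<Rightarrow> nat) \<Rightarrow> nat list \<Rightarrow> (nat \<Rightarrow> nat)" where
  "subL m [] = m"
| "subL m (j#Js) = subL (dec m j) Js"

lemma subL_eq: "distinct Js \<Longrightarrow> subL m Js = (\<lambda>l. if l \<in> set Js then m l - 1 else m l)"
  by (induction Js arbitrary: m) (auto simp: dec_def fun_eq_iff)

definition cK :: "nat \<Rightarrow> real \<Rightarrow> real" where
  "cK k q = (\<Prod>r<k. - (q - real r))"

lemma cK_0[simp]: "cK 0 q = 1" by (simp add: cK_def)

lemma cK_Suc: "cK (Suc k) q = - q * cK k (q - 1)"
  unfolding cK_def by (subst prod.lessThan_Suc_shift) (simp add: algebra_simps)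

lemma mon_split_pow:
  assumes j: "j \<in> {1..d}" and Ej: "E j = real p"
  shows "eqU d (mon d E q) (\<lambda>y. y j ^ p * mon d (E(j:=0)) q y)"
  unfolding eqU_def
proof
  fix y assume y: "y \<in> simplex_interior d"
  have "(\<Prod>l=1..d. y l powr E l) = y j powr E j * (\<Prod>l\<in>{1..d}-{j}. y l powr E l)"
    by (rule prod_split_i[OF j])
  moreover have "(\<Prod>l=1..d. y l powr (E(j:=0)) l) = (\<Prod>l\<in>{1..d}-{j}. y l powr E l)"
  proof -
    have c: "(\<Prod>l\<in>{1..d}-{j}. y l powr (E(j:=0)) l) = (\<Prod>l\<in>{1..d}-{j}. y l powr E l)"
      by (rule prod.cong) auto
    have "(\<Prod>l=1..d. y l powr (E(j:=0)) l) = y j powr (E(j:=0)) j * (\<Prod>l\<in>{1..d}-{j}. y l powr (E(j:=0)) l)"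
      by (rule prod_split_i[OF j])
    then show ?thesis using c U_pos[OF y j] by simp
  qed
  moreover have "y j powr E j = y j ^ p" using Ej U_pos[OF y j] by (simp add: powr_realpow)
  ultimately show "mon d E q y = y j ^ p * mon d (E(j:=0)) q y" unfolding mon_def by simp
qed

lemma KS:
  "distinct Js \<Longrightarrow> set Js \<subseteq> {1..d} \<Longrightarrow> (\<forall>j\<in>set Js. 1 \<le> m j) \<Longrightarrow> (\<forall>j\<in>set Js. E j = real (m j) - 1) \<Longrightarrow>
   eqU d (\<lambda>y. (\<Prod>j\<in>set Js. y j) * mpartial d m (mon d E q) y)
     (\<lambda>y. cK (length Js) q * mpartial d (subL m Js) (mon d (\<lambda>l. if l \<in> set Js then E l + 1 else E l) (q - real (length Js))) y)"
proof (induction Js arbitrary: m E q)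
  case Nil
  then show ?case by (simp add: eqU_def)
next
  case (Cons j Js)
  have j: "j \<in> {1..d}" and jn: "j \<notin> set Js" and dJs: "distinct Js" and sJs: "set Js \<subseteq> {1..d}"
    using Cons.prems by auto
  have mj: "1 \<le> m j" and Ej: "E j = real (m j) - 1" using Cons.prems by auto
  define p where "p = m j - 1"
  have mjp: "m j = Suc p" using mj by (simp add: p_def)
  have Ejp: "E j = real p" using Ej mj by (simp add: p_def of_nat_diff)
  define h where "h = mon d (E(j:=0)) q"
  define E1 where "E1 = E(j := real (m j))"
  have rh: "rep d h" unfolding h_def by (rule rep_mon)
  have step: "eqU d (\<lambda>y. y j * mpartial d m (mon d E q) y) (\<lambda>y. - q * mpartial d (dec m j) (mon d E1 (q - 1)) y)"
    unfolding eqU_def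
  proof
    fix y assume y: "y \<in> simplex_interior d"
    have "y j * mpartial d m (mon d E q) y = y j * mpartial d m (\<lambda>y. y j ^ p * h y) y"
      using Dm_cong[OF mon_split_pow[of j d E p q, OF j Ejp], of m] y unfolding eqU_def h_def by simp
    also have "\<dots> = mpartial d (dec m j) (\<lambda>y. y j ^ Suc p * partial j h y) y"
      using I1[of j d h m p, OF j rh mjp] y unfolding eqU_def by blast
    also have "\<dots> = mpartial d (dec m j) (\<lambda>y. - q * mon d E1 (q - 1) y) y"
    proof -
      have "eqU d (\<lambda>y. y j ^ Suc p * partial j h y) (\<lambda>y. - q * mon d E1 (q - 1) y)"
        unfolding eqU_def
      proof
        fix y assume y: "y \<in> simplex_interior d"
        have "partial j h y = - q * mon d (E(j:=0)) (q - 1) y"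
          using partial_mon[OF j, of "E(j:=0)" q] y unfolding eqU_def h_def by simp
        moreover have "mon d E1 (q - 1) y = y j ^ Suc p * mon d (E(j:=0)) (q - 1) y"
          using mon_split_pow[OF j, of E1 "Suc p" "q - 1"] y unfolding eqU_def E1_def by (simp add: mjp)
        ultimately show "y j ^ Suc p * partial j h y = - q * mon d E1 (q - 1) y" by simp
      qed
      from Dm_cong[OF this, of "dec m j"] y show ?thesis unfolding eqU_def by blast
    qed
    also have "\<dots> = - q * mpartial d (dec m j) (mon d E1 (q - 1)) y"
      using Dm_cmult[OF rep_mon, of d "dec m j" "- q" E1 "q - 1"] y unfolding eqU_def by blast
    finally show "y j * mpartial d m (mon d E q) y = - q * mpartial d (dec m j) (mon d E1 (q - 1)) y" .
  qed
  have IH: "eqU d (\<lambda>y. (\<Prod>j\<in>set Js. y j) * mpartial d (dec m j) (mon d E1 (q - 1)) y)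
     (\<lambda>y. cK (length Js) (q - 1) * mpartial d (subL (dec m j) Js) (mon d (\<lambda>l. if l \<in> set Js then E1 l + 1 else E1 l) (q - 1 - real (length Js))) y)"
    by (rule Cons.IH[OF dJs sJs]) (use Cons.prems jn in \<open>auto simp: dec_def E1_def\<close>)
  have expo: "(\<lambda>l. if l \<in> set Js then E1 l + 1 else E1 l) = (\<lambda>l. if l \<in> set (j#Js) then E l + 1 else E l)"
    using jn Ej by (auto simp: E1_def fun_eq_iff)
  show ?case unfolding eqU_def
  proof
    fix y assume y: "y \<in> simplex_interior d"
    have "(\<Prod>j\<in>set (j#Js). y j) * mpartial d m (mon d E q) y = (\<Prod>j\<in>set Js. y j) * (y j * mpartial d m (mon d E q) y)"
      using jn by simp
    also have "\<dots> = - q * ((\<Prod>j\<in>set Js. y j) * mpartial d (dec m j) (mon d E1 (q - 1)) y)"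
      using step y unfolding eqU_def by simp
    also have "\<dots> = - q * (cK (length Js) (q - 1) * mpartial d (subL (dec m j) Js) (mon d (\<lambda>l. if l \<in> set Js then E1 l + 1 else E1 l) (q - 1 - real (length Js))) y)"
      using IH y unfolding eqU_def by simp
    also have "\<dots> = cK (length (j#Js)) q * mpartial d (subL m (j#Js)) (mon d (\<lambda>l. if l \<in> set (j#Js) then E l + 1 else E l) (q - real (length (j#Js)))) y"
      unfolding expo by (simp add: cK_Suc algebra_simps)
    finally show "(\<Prod>j\<in>set (j#Js). y j) * mpartial d m (mon d E q) y = cK (length (j#Js)) q * mpartial d (subL m (j#Js)) (mon d (\<lambda>l. if l \<in> set (j#Js) then E l + 1 else E l) (q - real (length (j#Js)))) y" .
  qed
qed



lemma P_mon: "P d g m x = (\<Prod>i=1..d. x i powr (- g i)) * (1 - abs_pt d x) powr (- g (d+1)) *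
   mpartial d m (mon d (\<lambda>i. g i + real (m i)) (g (d+1) + real (abs_idx d m))) x"
  unfolding P_def mon_def by simp

lemma prod_shift_id: "(\<Prod>r<k. (N::real) - 1 - real r) * N = (\<Prod>r<k. N - real r) * (N - real k)"
proof (induction k)
  case 0 then show ?case by simp
next
  case (Suc k)
  have e1: "(\<Prod>r<Suc k. N - 1 - real r) = (\<Prod>r<k. N - 1 - real r) * (N - 1 - real k)" by simp
  have e2: "(\<Prod>r<Suc k. N - real r) = (\<Prod>r<k. N - real r) * (N - real k)" by simp
  have "(\<Prod>r<Suc k. N - 1 - real r) * N = ((\<Prod>r<k. N - 1 - real r) * N) * (N - 1 - real k)"
    unfolding e1 by (simp only: ac_simps)
  also have "\<dots> = ((\<Prod>r<k. N - real r) * (N - real k)) * (N - 1 - real k)" by (simp only: Suc.IH)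
  also have "\<dots> = (\<Prod>r<Suc k. N - real r) * (N - real (Suc k))" unfolding e2 by (simp add: algebra_simps)
  finally show ?case .
qed

lemma cK_zero: "1 \<le> k \<Longrightarrow> q = real k - 1 \<Longrightarrow> cK k q = 0"
  unfolding cK_def by (rule prod_zero) (auto intro!: bexI[of _ "k - 1"])



theorem corollary4p4:
  fixes d k :: nat and \<gamma> :: "nat \<Rightarrow> real" and n :: "nat \<Rightarrow> nat" and x :: "nat \<Rightarrow> real"
  assumes "1 \<le> k" and "k \<le> d"
    and "\<forall>j\<in>{d+2-k..d}. 1 \<le> n j"
    and "abs_idx d n \<noteq> 0"
    and "x \<in> simplex_interior d"
  shows "P d (ext_param d k \<gamma> (-1)) n x =
         (\<Prod>j=d+2-k..d. x j) * (1 - abs_pt d x) * (\<Sum>i=1..d. rhs_term d k \<gamma> n x i)"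
proof -
  note k1 = assms(1) and kd = assms(2) and nK = assms(3) and N0 = assms(4) and x = assms(5)
  define Ks where "Ks = [d+2-k..<d+1]"
  define K where "K = {d+2-k..d}"
  have setKs: "set Ks = K" unfolding Ks_def K_def by auto
  have dKs: "distinct Ks" unfolding Ks_def by simp
  have KU: "K \<subseteq> {1..d}" unfolding K_def using kd by auto
  have lenKs: "length Ks = k - 1"
  proof -
    have "length Ks = d + 1 - (d + 2 - k)" unfolding Ks_def by (simp only: length_upt)
    then show ?thesis using k1 kd by arith
  qed
  have finK: "finite K" unfolding K_def by simp
  have cardK: "card K = k - 1" using lenKs dKs setKs distinct_card by fastforce
  have inK: "l \<in> K \<longleftrightarrow> d + 2 - k \<le> l \<and> l \<le> d" for l unfolding K_def by simp
  have notK: "l \<in> {1..d} \<Longrightarrow> l \<notin> K \<longleftrightarrow> l \<le> d + 1 - k" for l using k1 kd by (auto simp: inK)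
  define gt where "gt = ext_param d k \<gamma> (-1)"
  define gp where "gp = ext_param d k \<gamma> 1"
  have gt_d1: "gt (d+1) = -1" and gp_d1: "gp (d+1) = 1"
    using k1 by (auto simp: gt_def gp_def ext_param_def)
  have gt_K: "l \<in> K \<Longrightarrow> gt l = -1" and gp_K: "l \<in> K \<Longrightarrow> gp l = 1" for l
    using k1 kd by (auto simp: gt_def gp_def ext_param_def inK)
  have g_nK: "l \<in> {1..d} \<Longrightarrow> l \<notin> K \<Longrightarrow> gt l = \<gamma> l \<and> gp l = \<gamma> l" for l
    using notK by (auto simp: gt_def gp_def ext_param_def)
  have nK': "l \<in> K \<Longrightarrow> 1 \<le> n l" for l using nK unfolding K_def by auto
  define N where "N = abs_idx d n"
  define m where "m = subL n Ks"
  have m_eq: "m l = (if l \<in> K then n l - 1 else n l)" for l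
    unfolding m_def subL_eq[OF dKs] setKs by simp
  have mreal: "real (m l) = real (n l) - (if l \<in> K then 1 else 0)" for l
  proof (cases "l \<in> K")
    case True then show ?thesis using nK'[OF True] by (simp add: m_eq of_nat_diff)
  next
    case False then show ?thesis by (simp add: m_eq)
  qed
  define E where "E = (\<lambda>i. gt i + real (n i))"
  define E' where "E' = (\<lambda>l. if l \<in> set Ks then E l + 1 else E l)"
  define M where "M = abs_idx d m"
  have MN: "real M = real N - real (k - 1)"
  proof -
    have "real M = (\<Sum>l=1..d. real (m l))" by (simp add: M_def abs_idx_def)
    also have "\<dots> = (\<Sum>l=1..d. real (n l) - (if l \<in> K then 1 else 0))"
      by (rule sum.cong) (simp_all only: mreal)
    also have "\<dots> = real N - (\<Sum>l=1..d. (if l \<in> K then 1 else 0))"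
      by (simp add: sum_subtractf N_def abs_idx_def)
    also have "(\<Sum>l=1..d. (if l \<in> K then 1 else 0::real)) = real (card K)"
      using KU by (simp add: sum.If_cases Int_absorb1)
    finally show ?thesis using cardK by simp
  qed
  define L where "L = 1 - abs_pt d x"
  have Lpos: "0 < L" using U_lin[OF x] by (simp add: L_def)
  define XK where "XK = (\<Prod>j\<in>K. x j)"
  define B where "B = (\<Prod>i=1..d. x i powr (- gp i))"
  define cc where "cc = cK (k - 1) (real N - 1)"
  define G where "G = mon d E' (real N - 1 - real (k - 1))"
  have xpos: "l \<in> {1..d} \<Longrightarrow> 0 < x l" for l using U_pos[OF x] .
  have A0: "(\<Prod>i=1..d. x i powr (- gt i)) = B * XK * XK"
  proof -
    have "x i powr (- gt i) = x i powr (- gp i) * (if i \<in> K then x i * x i else 1)" if i: "i \<in> {1..d}" for i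
    proof (cases "i \<in> K")
      case True
      then show ?thesis using xpos[OF i] gt_K gp_K by (simp add: powr_minus field_simps)
    next
      case False
      then show ?thesis using g_nK[OF i] by simp
    qed
    then have "(\<Prod>i=1..d. x i powr (- gt i)) = (\<Prod>i=1..d. x i powr (- gp i) * (if i \<in> K then x i * x i else 1))"
      by (rule prod.cong[OF refl])
    also have "\<dots> = B * (\<Prod>i=1..d. (if i \<in> K then x i * x i else 1))"
      by (simp add: prod.distrib B_def)
    also have "(\<Prod>i=1..d. (if i \<in> K then x i * x i else 1)) = (\<Prod>i\<in>K. x i * x i)"
      using KU by (simp add: prod.If_cases Int_absorb1)
    also have "\<dots> = XK * XK" by (simp add: prod.distrib XK_def)
    finally show ?thesis by (simp add: ac_simps)
  qed
  have KSx: "XK * mpartial d n (mon d E (real N - 1)) x = cc * mpartial d m G x"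
  proof -
    have "(\<forall>j\<in>set Ks. 1 \<le> n j)" using nK' setKs by auto
    moreover have "(\<forall>j\<in>set Ks. E j = real (n j) - 1)" using gt_K setKs by (auto simp: E_def)
    ultimately have "eqU d (\<lambda>y. (\<Prod>j\<in>set Ks. y j) * mpartial d n (mon d E (real N - 1)) y)
     (\<lambda>y. cK (length Ks) (real N - 1) * mpartial d (subL n Ks) (mon d (\<lambda>l. if l \<in> set Ks then E l + 1 else E l) (real N - 1 - real (length Ks))) y)"
      using KS[OF dKs] KU setKs by blast
    then show ?thesis using x unfolding eqU_def XK_def cc_def m_def G_def E'_def setKs lenKs by blast
  qed
  have LHS: "P d gt n x = B * XK * L * (cc * mpartial d m G x)"
  proof -
    have "P d gt n x = (\<Prod>i=1..d. x i powr (- gt i)) * L powr 1 * mpartial d n (mon d E (real N - 1)) x"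
      unfolding P_mon gt_d1 L_def E_def N_def by simp
    also have "\<dots> = B * XK * L * (XK * mpartial d n (mon d E (real N - 1)) x)"
      using Lpos unfolding A0 by (simp add: ac_simps)
    finally show ?thesis unfolding KSx .
  qed
  define T where "T = (\<lambda>i. mpartial d (dec m i) (mon d (E'(i := E' i - 1)) (real M)) x)"
  define lm where "lm = (\<lambda>i. lam d k n (n i) (gt i))"
  have rhs_i: "rhs_term d k \<gamma> n x i = (if 1 \<le> m i then lm i * (B * (1 / L) * T i) else 0)"
    if i: "i \<in> {1..d}" for i
  proof -
    have sh: "shifted_idx d k n i j = int (m j) - (if j = i then 1 else 0)" if j: "j \<in> {1..d}" for j
      using nK'[of j] j by (auto simp: shifted_idx_def m_eq inK of_nat_diff)
    have cond: "(\<forall>j\<in>{1..d}. 0 \<le> shifted_idx d k n i j) \<longleftrightarrow> 1 \<le> m i"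
    proof
      assume "\<forall>j\<in>{1..d}. 0 \<le> shifted_idx d k n i j"
      then show "1 \<le> m i" using sh[OF i] i by fastforce
    next
      assume "1 \<le> m i"
      then show "\<forall>j\<in>{1..d}. 0 \<le> shifted_idx d k n i j" using sh by auto
    qed
    show ?thesis
    proof (cases "1 \<le> m i")
      case False
      then have nc: "\<not> (\<forall>j\<in>{1..d}. 0 \<le> shifted_idx d k n i j)" using cond by blast
      show ?thesis unfolding rhs_term_def using nc False by (simp only: if_False if_not_P[OF nc])
    next
      case True
      note mi = True
      define s where "s = (\<lambda>j. nat (shifted_idx d k n i j))"
      have s_eq: "\<forall>l\<in>{1..d}. s l = dec m i l" using sh True by (auto simp: s_def dec_def)
      have abs_s: "abs_idx d s = M - 1"
      proof -
        have "abs_idx d s = abs_idx d (dec m i)" unfolding abs_idx_def using s_eq by (intro sum.cong) auto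
        then show ?thesis using abs_idx_dec[of i d m, OF i True] by (simp add: M_def)
      qed
      have M1: "1 \<le> M" using abs_idx_dec[of i d m, OF i True] by (simp add: M_def)
      have expo: "\<forall>l\<in>{1..d}. gp l + real (s l) = (E'(i := E' i - 1)) l"
      proof
        fix l assume l: "l \<in> {1..d}"
        show "gp l + real (s l) = (E'(i := E' i - 1)) l"
        proof (cases "l \<in> K")
          case True
          then show ?thesis using nK'[OF True] gp_K[OF True] gt_K[OF True] s_eq l True setKs mi m_eq[of i]
            by (auto simp: E'_def E_def dec_def m_eq of_nat_diff)
        next
          case False
          then show ?thesis using g_nK[OF l False] s_eq l setKs mi m_eq[of i]
            by (auto simp: E'_def E_def dec_def m_eq of_nat_diff)
        qed
      qed
      have Pv: "P d gp s x = B * (1 / L) * T i"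
      proof -
        have "P d gp s x = B * L powr (-1) * mpartial d s (mon d (\<lambda>l. gp l + real (s l)) (1 + real (abs_idx d s))) x"
          unfolding P_mon gp_d1 L_def B_def by simp
        also have "mpartial d s (mon d (\<lambda>l. gp l + real (s l)) (1 + real (abs_idx d s))) = T' "
          if "T' = mpartial d (dec m i) (mon d (E'(i := E' i - 1)) (real M))" for T'
          unfolding that using Dm_idx_cong[OF s_eq] mon_cong[OF expo, of "1 + real (abs_idx d s)" "real M"] abs_s M1
          by (simp add: of_nat_diff fun_upd_def)
        finally show ?thesis using Lpos by (simp add: T_def powr_minus divide_inverse ac_simps)
      qed
      have c2: "\<forall>j\<in>{1..d}. 0 \<le> shifted_idx d k n i j" using cond True by blast
      have "rhs_term d k \<gamma> n x i = lam d k n (n i) (gt i) * P d gp s x"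
        unfolding rhs_term_def gt_def gp_def s_def by (rule if_P[OF c2])
      then show ?thesis using True by (simp only: Pv lm_def if_True)
    qed
  qed
  have RHS: "XK * L * (\<Sum>i=1..d. rhs_term d k \<gamma> n x i) = B * XK * (\<Sum>i=1..d. (if 1 \<le> m i then lm i * T i else 0))"
  proof -
    have "(\<Sum>i=1..d. rhs_term d k \<gamma> n x i) = (\<Sum>i=1..d. (1 / L) * (B * (if 1 \<le> m i then lm i * T i else 0)))"
      by (rule sum.cong) (auto simp: rhs_i)
    also have "\<dots> = (1 / L * B) * (\<Sum>i=1..d. (if 1 \<le> m i then lm i * T i else 0))"
      by (simp only: sum_distrib_left mult.assoc)
    finally have "(\<Sum>i=1..d. rhs_term d k \<gamma> n x i) = (1 / L * B) * (\<Sum>i=1..d. (if 1 \<le> m i then lm i * T i else 0))" .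
    then show ?thesis using Lpos by simp
  qed
  have prodK: "(\<Prod>j=d+2-k..d. x j) = XK" unfolding XK_def K_def ..
  show ?thesis
  proof (cases "M = 0")
    case True
    have "cc = 0" unfolding cc_def using MN True N0 k1
      by (intro cK_zero) (auto simp: N_def)
    moreover have "(\<Sum>i=1..d. (if 1 \<le> m i then lm i * T i else 0)) = 0"
      using abs_idx_zero[of d m] True by (intro sum.neutral) (auto simp: M_def)
    ultimately show ?thesis unfolding prodK gt_def[symmetric] LHS using RHS by (simp add: L_def)
  next
    case False
    have K1x: "L * mpartial d m G x = (1 / real M) * (\<Sum>i=1..d. real (m i) * E' i * T i)"
    proof -
      have qq: "real N - 1 - real (k - 1) = real M - 1" using MN by simp
      have "G = mon d E' (real M - 1)" unfolding G_def qq ..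
      then show ?thesis using K1[of d m E'] False x unfolding eqU_def L_def T_def M_def by simp
    qed
    have coef: "cc * (1 / real M) * (real (m i) * E' i) = (if 1 \<le> m i then lm i else 0)" if i: "i \<in> {1..d}" for i
    proof (cases "1 \<le> m i")
      case False then show ?thesis by simp
    next
      case True
      have me: "real (m i) * E' i = real (n i) * (real (n i) + gt i)"
      proof (cases "i \<in> K")
        case True
        then show ?thesis using nK'[OF True] gt_K[OF True] setKs
          by (simp add: m_eq E'_def E_def of_nat_diff algebra_simps)
      next
        case False
        then show ?thesis using setKs by (simp add: m_eq E'_def E_def algebra_simps)
      qed
      have Npos: "real N \<noteq> 0" using N0 by (simp add: N_def)
      have Mpos: "real M \<noteq> 0" using False by simp
      have cc_eq: "cc = (-1) ^ (k - 1) * (\<Prod>r<k-1. real N - 1 - real r)"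
      proof -
        have neg: "(\<Prod>r<j. - (f r)) = (-1) ^ j * (\<Prod>r<j. f r)" for j and f :: "nat \<Rightarrow> real"
          by (induction j) auto
        show ?thesis unfolding cc_def cK_def by (rule neg)
      qed
      have pid: "(\<Prod>r<k-1. real N - 1 - real r) * real N = (\<Prod>r<k-1. real N - real r) * real M"
        using prod_shift_id[where k="k-1" and N="real N"] MN by simp
      have P12: "(\<Prod>r<k-1. real N - 1 - real r) / real M = (\<Prod>r<k-1. real N - real r) / real N"
        using pid Npos Mpos by (simp add: divide_simps)
      have "cc * (1 / real M) * (real (m i) * E' i)
          = (-1) ^ (k - 1) * (real (n i) * (real (n i) + gt i)) * ((\<Prod>r<k-1. real N - 1 - real r) / real M)"
        unfolding cc_eq me by (simp only: divide_inverse mult_1 ac_simps)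
      also have "\<dots> = lm i"
        by (simp only: P12, simp only: lm_def lam_def N_def[symmetric] atLeast0LessThan divide_inverse ac_simps)
      finally show ?thesis using True by simp
    qed
    have "P d gt n x = B * XK * cc * (L * mpartial d m G x)" unfolding LHS by (simp add: ac_simps)
    also have "\<dots> = B * XK * (\<Sum>i=1..d. cc * (1 / real M) * (real (m i) * E' i) * T i)"
      unfolding K1x by (simp add: sum_distrib_left ac_simps)
    also have "(\<Sum>i=1..d. cc * (1 / real M) * (real (m i) * E' i) * T i) = (\<Sum>i=1..d. (if 1 \<le> m i then lm i * T i else 0))"
    proof (rule sum.cong[OF refl])
      fix i assume i: "i \<in> {1..d}"
      show "cc * (1 / real M) * (real (m i) * E' i) * T i = (if 1 \<le> m i then lm i * T i else 0)"
        by (simp only: coef[OF i]) simp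
    qed
    finally have fin: "P d gt n x = B * XK * (\<Sum>i=1..d. (if 1 \<le> m i then lm i * T i else 0))" .
    show ?thesis unfolding prodK gt_def[symmetric] L_def[symmetric] by (rule trans[OF fin RHS[symmetric]])
  qed
qed


end
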